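(* Let $\mathcal{K}=\{1,\dots,K\}$ and $\mathcal{N}=\{1,\dots,N\}$, and let all constants be as described in the context. For each $k\in\mathcal{K}$ let $k'\in\arg\max_{n\in\mathcal{N}} g_{k,n}$. Consider problem (P1): maximize over $\{p_n\},\{p_{k,n}\},\{b_{k,n}\},\{x_k\},\{q_k\},\{w_k\}$ the ratio $$\frac{\sum_{n=1}^N \rho(B^n_{SC},p_n,g_n)+\sum_{k=1}^K\sum_{n=1}^N x_k\,\rho(b_{k,n},p_{k,n},g_{k,n})}{\sum_{n=1}^N \frac{p_n}{\xi}+\sum_{n=1}^N\sum_{k=1}^K x_k\frac{p_{k,n}}{\xi}+\sum_{k=1}^K x_k\frac{q_k}{\xi}+P_{\rm c}}$$ subject to C1: $\sum_{n} p_n+\sum_{n}\sum_{k} p_{k,n}+\sum_k q_k\le P^{SC}_{\max}$; C2: $\sum_{n} b_{k,n}+w_k\le x_k W^k_{MC}$ for all $k\in\mathcal{K}$; C3: $\rho(w_k,q_k,h_k)\ge x_k R^k_{MC}$ for all $k\in\mathcal{K}$; C4: $\sum_{n}\rho(B^n_{SC},p_n,g_n)+\sum_k\sum_n x_k\rho(b_{k,n},p_{k,n},g_{k,n})\ge R^{SC}_{\min}$; C5: $x_k\in\{0,1\}$ for all $k$; C6: $b_{k,n}\ge0$, $w_k\ge0$ for all $k,n$; C7: $p_n\ge0$, $p_{k,n}\ge0$, $q_k\ge0$ for all $k,n$. Consider problem (P2): maximize over $\{p_n\},\{p_{k,k'}\},\{b_{k,k'}\},\{x_k\},\{q_k\},\{w_k\}$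 the ratio $$\frac{\sum_{n=1}^N \rho(B^n_{SC},p_n,g_n)+\sum_{k=1}^K x_k\,\rho(b_{k,k'},p_{k,k'},g_{k,k'})}{\sum_{n=1}^N \frac{p_n}{\xi}+\sum_{k=1}^K x_k\frac{p_{k,k'}}{\xi}+\sum_{k=1}^K x_k\frac{q_k}{\xi}+P_{\rm c}}$$ subject to C1: $\sum_n p_n+\sum_k p_{k,k'}+\sum_k q_k\le P^{SC}_{\max}$; C2: $b_{k,k'}+w_k= x_kW^k_{MC}$ for all $k$; C3: $\rho(w_k,q_k,h_k)= x_kR^k_{MC}$ for all $k$; C4: $\sum_n\rho(B^n_{SC},p_n,g_n)+\sum_k x_k\rho(b_{k,k'},p_{k,k'},g_{k,k'})\ge R^{SC}_{\min}$; together with $x_k\in\{0,1\}$, $b_{k,k'}\ge0$, $w_k\ge0$, $p_n\ge0$, $p_{k,k'}\ge0$, $q_k\ge0$. Then the optimal solution of (P1) is equivalent to that of (P2): the optimal values of (P1) and (P2) coincide, and an optimal solution of (P2), extended by setting $b_{k,n}=0$ and $p_{k,n}=0$ for all $n\neq k'$, is an optimal solution of (P1). In particular, at an optimum of (P1) the bandwidth $W^k_{MC}$ of each MU $k$ is shared with at most one SU, namely SU $k'$.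
   Context: Setting: a small cell (SC) base station serves small-cell users (SUs) indexed by $\mathcal{N}=\{1,\dots,N\}$ and may additionally serve macro-cell users (MUs) indexed by $\mathcal{K}=\{1,\dots,K\}$. Given constants: noise spectral density $N_0>0$; power amplifier efficiency $\xi\in(0,1]$; circuit power $P_{\rm c}>0$; maximum transmit power $P^{SC}_{\max}>0$; minimum SC system rate $R^{SC}_{\min}\ge0$. For each MU $k$: licensed bandwidth $W^k_{MC}>0$, minimum rate $R^k_{MC}>0$, channel power gain $h_k>0$ from the SC to MU $k$, and channel power gains $g_{k,n}>0$ from the SC to SU $n$ on MU $k$'s bandwidth. For each SU $n$: licensed bandwidth $B^n_{SC}>0$ and channel power gain $g_n>0$ on it. For $b\ge0$, $p\ge0$, $g>0$ define the rate $\rho(b,p,g)=b\log_2\!\big(1+\frac{pg}{bN_0}\big)$, with $\rho(0,p,g)=0$. Variables: $x_k$ indicates whether MU $k$ is served; $w_k,q_k$ are the bandwidth and power used to serve MU $k$; $b_{k,n},p_{k,n}$ are the bandwidth taken from MU $k$'s band and power used for SU $n$; $p_n$ is the power for SU $n$ on its own band. *)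

theory Defs
  imports Complex_Main
begin

definition rho :: "real \<Rightarrow> real \<Rightarrow> real \<Rightarrow> real \<Rightarrow> real" where
  "rho N0 b p g = (if b = 0 then 0 else b * log 2 (1 + p * g / (b * N0)))"

definition num1 where
  "num1 K N N0 B g gkn pn pkn bkn x =
     (\<Sum>n\<in>{1..N}. rho N0 (B n) (pn n) (g n))
   + (\<Sum>k\<in>{1..K}. \<Sum>n\<in>{1..N}. x k * rho N0 (bkn k n) (pkn k n) (gkn k n))"

definition obj1 :: "nat \<Rightarrow> nat \<Rightarrow> real \<Rightarrow> real \<Rightarrow> real \<Rightarrow> (nat \<Rightarrow> real) \<Rightarrow> (nat \<Rightarrow> real)
    \<Rightarrow> (nat \<Rightarrow> nat \<Rightarrow> real) \<Rightarrow> (nat \<Rightarrow> real) \<Rightarrow> (nat \<Rightarrow> nat \<Rightarrow> real) \<Rightarrow> (nat \<Rightarrow> nat \<Rightarrow> real)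
    \<Rightarrow> (nat \<Rightarrow> real) \<Rightarrow> (nat \<Rightarrow> real) \<Rightarrow> (nat \<Rightarrow> real) \<Rightarrow> real" where
  "obj1 K N N0 xi Pc B g gkn pn pkn bkn x q w =
     num1 K N N0 B g gkn pn pkn bkn x /
     ((\<Sum>n\<in>{1..N}. pn n / xi)
      + (\<Sum>n\<in>{1..N}. \<Sum>k\<in>{1..K}. x k * pkn k n / xi)
      + (\<Sum>k\<in>{1..K}. x k * q k / xi) + Pc)"

definition feas1 :: "nat \<Rightarrow> nat \<Rightarrow> real \<Rightarrow> real \<Rightarrow> real \<Rightarrow> (nat \<Rightarrow> real) \<Rightarrow> (nat \<Rightarrow> real)
    \<Rightarrow> (nat \<Rightarrow> real) \<Rightarrow> (nat \<Rightarrow> real) \<Rightarrow> (nat \<Rightarrow> real) \<Rightarrow> (nat \<Rightarrow> nat \<Rightarrow> real)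
    \<Rightarrow> (nat \<Rightarrow> real) \<Rightarrow> (nat \<Rightarrow> nat \<Rightarrow> real) \<Rightarrow> (nat \<Rightarrow> nat \<Rightarrow> real)
    \<Rightarrow> (nat \<Rightarrow> real) \<Rightarrow> (nat \<Rightarrow> real) \<Rightarrow> (nat \<Rightarrow> real) \<Rightarrow> bool" where
  "feas1 K N N0 Pmax Rmin W RMC h B g gkn pn pkn bkn x q w \<longleftrightarrow>
     (\<Sum>n\<in>{1..N}. pn n) + (\<Sum>n\<in>{1..N}. \<Sum>k\<in>{1..K}. pkn k n) + (\<Sum>k\<in>{1..K}. q k) \<le> Pmax
   \<and> (\<forall>k\<in>{1..K}. (\<Sum>n\<in>{1..N}. bkn k n) + w k \<le> x k * W k)
   \<and> (\<forall>k\<in>{1..K}. rho N0 (w k) (q k) (h k) \<ge> x k * RMC k)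
   \<and> num1 K N N0 B g gkn pn pkn bkn x \<ge> Rmin
   \<and> (\<forall>k\<in>{1..K}. x k \<in> {0, 1})
   \<and> (\<forall>k\<in>{1..K}. \<forall>n\<in>{1..N}. bkn k n \<ge> 0) \<and> (\<forall>k\<in>{1..K}. w k \<ge> 0)
   \<and> (\<forall>n\<in>{1..N}. pn n \<ge> 0) \<and> (\<forall>k\<in>{1..K}. \<forall>n\<in>{1..N}. pkn k n \<ge> 0)
   \<and> (\<forall>k\<in>{1..K}. q k \<ge> 0)"

text \<open>Problem (P2). kp k = k'. Variables: pn n = p_n, pk k = p_{k,k'}, bk k = b_{k,k'},
  x k, q k, w k.\<close>

definition num2 where
  "num2 K N N0 B g gkn kp pn pk bk x =
     (\<Sum>n\<in>{1..N}. rho N0 (B n) (pn n) (g n))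
   + (\<Sum>k\<in>{1..K}. x k * rho N0 (bk k) (pk k) (gkn k (kp k)))"

definition obj2 :: "nat \<Rightarrow> nat \<Rightarrow> real \<Rightarrow> real \<Rightarrow> real \<Rightarrow> (nat \<Rightarrow> real) \<Rightarrow> (nat \<Rightarrow> real)
    \<Rightarrow> (nat \<Rightarrow> nat \<Rightarrow> real) \<Rightarrow> (nat \<Rightarrow> nat) \<Rightarrow> (nat \<Rightarrow> real) \<Rightarrow> (nat \<Rightarrow> real) \<Rightarrow> (nat \<Rightarrow> real)
    \<Rightarrow> (nat \<Rightarrow> real) \<Rightarrow> (nat \<Rightarrow> real) \<Rightarrow> (nat \<Rightarrow> real) \<Rightarrow> real" where
  "obj2 K N N0 xi Pc B g gkn kp pn pk bk x q w =
     num2 K N N0 B g gkn kp pn pk bk x /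
     ((\<Sum>n\<in>{1..N}. pn n / xi)
      + (\<Sum>k\<in>{1..K}. x k * pk k / xi)
      + (\<Sum>k\<in>{1..K}. x k * q k / xi) + Pc)"

definition feas2 :: "nat \<Rightarrow> nat \<Rightarrow> real \<Rightarrow> real \<Rightarrow> real \<Rightarrow> (nat \<Rightarrow> real) \<Rightarrow> (nat \<Rightarrow> real)
    \<Rightarrow> (nat \<Rightarrow> real) \<Rightarrow> (nat \<Rightarrow> real) \<Rightarrow> (nat \<Rightarrow> real) \<Rightarrow> (nat \<Rightarrow> nat \<Rightarrow> real) \<Rightarrow> (nat \<Rightarrow> nat)
    \<Rightarrow> (nat \<Rightarrow> real) \<Rightarrow> (nat \<Rightarrow> real) \<Rightarrow> (nat \<Rightarrow> real)
    \<Rightarrow> (nat \<Rightarrow> real) \<Rightarrow> (nat \<Rightarrow> real) \<Rightarrow> (nat \<Rightarrow> real) \<Rightarrow> bool" where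
  "feas2 K N N0 Pmax Rmin W RMC h B g gkn kp pn pk bk x q w \<longleftrightarrow>
     (\<Sum>n\<in>{1..N}. pn n) + (\<Sum>k\<in>{1..K}. pk k) + (\<Sum>k\<in>{1..K}. q k) \<le> Pmax
   \<and> (\<forall>k\<in>{1..K}. bk k + w k = x k * W k)
   \<and> (\<forall>k\<in>{1..K}. rho N0 (w k) (q k) (h k) = x k * RMC k)
   \<and> num2 K N N0 B g gkn kp pn pk bk x \<ge> Rmin
   \<and> (\<forall>k\<in>{1..K}. x k \<in> {0, 1})
   \<and> (\<forall>k\<in>{1..K}. bk k \<ge> 0) \<and> (\<forall>k\<in>{1..K}. w k \<ge> 0)
   \<and> (\<forall>n\<in>{1..N}. pn n \<ge> 0) \<and> (\<forall>k\<in>{1..K}. pk k \<ge> 0)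
   \<and> (\<forall>k\<in>{1..K}. q k \<ge> 0)"

definition ext :: "(nat \<Rightarrow> nat) \<Rightarrow> (nat \<Rightarrow> real) \<Rightarrow> nat \<Rightarrow> nat \<Rightarrow> real" where
  "ext kp v k n = (if n = kp k then v k else 0)"

end

theory Submission imports Defs begin

lemma rho_nonneg:
  assumes "b \<ge> 0" "p \<ge> 0" "g \<ge> 0" "N0 > 0"
  shows "rho N0 b p g \<ge> 0"
proof (cases "b = 0")
  case False
  hence "0 \<le> p * g / (b * N0)" using assms by auto
  hence "0 \<le> log 2 (1 + p * g / (b * N0))" by simp
  thus ?thesis using assms by (simp add: rho_def)
qed (simp add: rho_def)

lemma rho_zero_b[simp]: "rho N0 0 p g = 0" by (simp add: rho_def)
lemma rho_zero_p[simp]: "rho N0 b 0 g = 0" by (simp add: rho_def)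

lemma rho_mono_g:
  assumes "b \<ge> 0" "p \<ge> 0" "0 \<le> g" "g \<le> g'" "N0 > 0"
  shows "rho N0 b p g \<le> rho N0 b p g'"
proof (cases "b = 0")
  case False
  hence bp: "b > 0" using assms by simp
  have "p * g / (b * N0) \<le> p * g' / (b * N0)"
    using assms bp by (intro divide_right_mono mult_left_mono) auto
  moreover have "0 \<le> p * g / (b * N0)" using assms bp by auto
  ultimately have "log 2 (1 + p * g / (b * N0)) \<le> log 2 (1 + p * g' / (b * N0))"
    by (subst log_le_cancel_iff) auto
  thus ?thesis using bp by (simp add: rho_def mult_left_mono)
qed simp

lemma rho_tangent:
  assumes "b \<ge> 0" "p \<ge> 0" "G \<ge> 0" "N0 > 0" "U > 0"
  shows "rho N0 b p G \<le> (b * ln U + (b + p*G/N0 - b*U)/U) / ln 2"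
proof (cases "b = 0")
  case True
  thus ?thesis using assms by simp
next
  case False
  hence bp: "b > 0" using assms by simp
  define u where "u = 1 + p * G / (b * N0)"
  have u0: "u > 0" unfolding u_def using assms bp by (simp add: add_pos_nonneg)
  have "ln (u / U) \<le> u / U - 1" using u0 assms by (intro ln_le_minus_one) simp
  hence "ln u - ln U \<le> u / U - 1" using u0 assms by (simp add: ln_div)
  hence "b * (ln u - ln U) \<le> b * (u / U - 1)" using bp by (intro mult_left_mono) auto
  moreover have "b * u = b + p * G / N0" unfolding u_def using bp by (simp add: field_simps)
  ultimately have "b * ln u \<le> b * ln U + (b + p*G/N0 - b*U)/U"
    using assms by (simp add: field_simps)
  hence "b * ln u / ln 2 \<le> (b * ln U + (b + p*G/N0 - b*U)/U) / ln 2"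
    by (intro divide_right_mono) auto
  thus ?thesis using bp unfolding rho_def u_def log_def by simp
qed

lemma rho_sum:
  assumes "finite I" "\<forall>i\<in>I. b i \<ge> 0 \<and> p i \<ge> 0" "G \<ge> 0" "N0 > 0"
  shows "(\<Sum>i\<in>I. rho N0 (b i) (p i) G) \<le> rho N0 (\<Sum>i\<in>I. b i) (\<Sum>i\<in>I. p i) G"
proof (cases "(\<Sum>i\<in>I. b i) = 0")
  case True
  hence "\<forall>i\<in>I. b i = 0" using assms sum_nonneg_eq_0_iff by blast
  thus ?thesis by simp
next
  case False
  define B where "B = (\<Sum>i\<in>I. b i)"
  define P where "P = (\<Sum>i\<in>I. p i)"
  have B0: "B > 0" using False assms unfolding B_def by (metis order.not_eq_order_implies_strict sum_nonneg)
  have P0: "P \<ge> 0" unfolding P_def using assms by (simp add: sum_nonneg)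
  define U where "U = 1 + P * G / (B * N0)"
  have U0: "U > 0" unfolding U_def using assms B0 P0 by (simp add: add_pos_nonneg)
  have "(\<Sum>i\<in>I. rho N0 (b i) (p i) G) \<le> (\<Sum>i\<in>I. (b i * ln U + (b i + p i*G/N0 - b i*U)/U) / ln 2)"
    using assms U0 by (intro sum_mono rho_tangent) auto
  also have "\<dots> = (B * ln U + (B + P*G/N0 - B*U)/U) / ln 2"
    unfolding B_def P_def
    by (simp add: sum_divide_distrib[symmetric] sum.distrib sum_distrib_right[symmetric]
          sum_distrib_left[symmetric] sum_subtractf algebra_simps)
  also have "B + P*G/N0 - B*U = 0" unfolding U_def using B0 assms by (simp add: field_simps)
  also have "(B * ln U + 0/U) / ln 2 = rho N0 B P G"
    using B0 unfolding rho_def U_def log_def by simp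
  finally show ?thesis unfolding B_def P_def .
qed

lemma rho_mono_b:
  assumes "0 \<le> b" "b \<le> b'" "p \<ge> 0" "G \<ge> 0" "N0 > 0"
  shows "rho N0 b p G \<le> rho N0 b' p G"
proof -
  let ?b = "\<lambda>i::nat. if i = 0 then b else b' - b"
  let ?p = "\<lambda>i::nat. if i = 0 then p else 0"
  have "(\<Sum>i\<in>{0,1}. rho N0 (?b i) (?p i) G) \<le> rho N0 (\<Sum>i\<in>{0,1}. ?b i) (\<Sum>i\<in>{0,1}. ?p i) G"
    using assms by (intro rho_sum) auto
  thus ?thesis by simp
qed

lemma rho_ivt:
  assumes "w > 0" "h > 0" "N0 > 0" "q \<ge> 0" "0 \<le> R" "R \<le> rho N0 w q h"
  shows "\<exists>t\<ge>0. t \<le> q \<and> rho N0 w t h = R"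
proof -
  have "\<forall>t. 0 \<le> t \<and> t \<le> q \<longrightarrow> isCont (\<lambda>t. rho N0 w t h) t"
  proof (intro allI impI)
    fix t assume t: "0 \<le> t \<and> t \<le> q"
    have "1 + t * h / (w * N0) > 0" using assms t by (simp add: add_pos_nonneg)
    hence "isCont (\<lambda>t. w * log 2 (1 + t * h / (w * N0))) t"
      using assms t by (intro continuous_intros) auto
    thus "isCont (\<lambda>t. rho N0 w t h) t" using assms unfolding rho_def by simp
  qed
  moreover have "rho N0 w 0 h \<le> R" using assms by simp
  ultimately show ?thesis using IVT[of "\<lambda>t. rho N0 w t h" 0 R q] assms by auto
qed

lemma Sup_same_ub:
  fixes A B :: "real set"
  assumes "\<And>z. (\<forall>x\<in>A. x \<le> z) \<longleftrightarrow> (\<forall>x\<in>B. x \<le> z)"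
  shows "Sup A = Sup B"
proof -
  have "(\<lambda>z. \<forall>x\<in>A. x \<le> z) = (\<lambda>z. \<forall>x\<in>B. x \<le> z)" using assms by auto
  thus ?thesis unfolding Sup_real_def by simp
qed

lemma sum_ext:
  assumes "kp k \<in> {1..N}"
  shows "(\<Sum>n\<in>{1..N}. ext kp v k n) = v k"
  using assms unfolding ext_def by (simp add: sum.delta')

lemma sum_ext_rho:
  assumes "kp k \<in> {1..N}"
  shows "(\<Sum>n\<in>{1..N}. x k * rho N0 (ext kp b k n) (ext kp p k n) (gkn k n))
        = x k * rho N0 (b k) (p k) (gkn k (kp k))"
proof -
  have "(\<Sum>n\<in>{1..N}. x k * rho N0 (ext kp b k n) (ext kp p k n) (gkn k n))
      = (\<Sum>n\<in>{1..N}. if kp k = n then x k * rho N0 (b k) (p k) (gkn k (kp k)) else 0)"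
    by (intro sum.cong) (auto simp: ext_def)
  thus ?thesis using assms by (simp add: sum.delta)
qed

lemma ext_feas:
  assumes kp: "\<forall>k\<in>{1..K}. kp k \<in> {1..N}"
    and F: "feas2 K N N0 Pmax Rmin W RMC h B g gkn kp pn pk bk x q w"
  shows "feas1 K N N0 Pmax Rmin W RMC h B g gkn pn (ext kp pk) (ext kp bk) x q w
     \<and> obj1 K N N0 xi Pc B g gkn pn (ext kp pk) (ext kp bk) x q w
       = obj2 K N N0 xi Pc B g gkn kp pn pk bk x q w"
proof -
  have n: "num1 K N N0 B g gkn pn (ext kp pk) (ext kp bk) x = num2 K N N0 B g gkn kp pn pk bk x"
    unfolding num1_def num2_def using kp
    by (intro arg_cong2[where f="(+)"] refl sum.cong) (rule sum_ext_rho, auto)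
  have s1: "(\<Sum>n\<in>{1..N}. \<Sum>k\<in>{1..K}. ext kp pk k n) = (\<Sum>k\<in>{1..K}. pk k)"
    by (subst sum.swap, intro sum.cong refl sum_ext) (use kp in auto)
  have s2: "(\<Sum>n\<in>{1..N}. \<Sum>k\<in>{1..K}. x k * ext kp pk k n / xi) = (\<Sum>k\<in>{1..K}. x k * pk k / xi)"
  proof -
    have "(\<Sum>n\<in>{1..N}. \<Sum>k\<in>{1..K}. x k * ext kp pk k n / xi)
        = (\<Sum>k\<in>{1..K}. x k / xi * (\<Sum>n\<in>{1..N}. ext kp pk k n))"
      by (subst sum.swap) (simp add: sum_distrib_left)
    also have "\<dots> = (\<Sum>k\<in>{1..K}. x k / xi * pk k)"
      by (intro sum.cong refl arg_cong2[where f="(*)"] sum_ext) (use kp in auto)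
    finally show ?thesis by simp
  qed
  have s3: "\<forall>k\<in>{1..K}. (\<Sum>n\<in>{1..N}. ext kp bk k n) = bk k" by (intro ballI sum_ext) (use kp in auto)
  show ?thesis using F n s1 s2 s3
    unfolding feas1_def feas2_def obj1_def obj2_def by (auto simp: ext_def)
qed

lemma transform:
  assumes N0: "N0 > 0" and xi: "0 < xi" and Pc: "Pc > 0" and Rmin: "Rmin \<ge> 0"
    and WRh: "\<forall>k\<in>{1..K}. W k > 0 \<and> RMC k > 0 \<and> h k > 0"
    and gp: "\<forall>k\<in>{1..K}. \<forall>n\<in>{1..N}. gkn k n > 0"
    and kp: "\<forall>k\<in>{1..K}. kp k \<in> {1..N} \<and> (\<forall>n\<in>{1..N}. gkn k n \<le> gkn k (kp k))"
    and F: "feas1 K N N0 Pmax Rmin W RMC h B g gkn pn pkn bkn x q w"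
  shows "\<exists>pk bk qs. feas2 K N N0 Pmax Rmin W RMC h B g gkn kp pn pk bk x qs w
     \<and> obj1 K N N0 xi Pc B g gkn pn pkn bkn x q w \<le> obj2 K N N0 xi Pc B g gkn kp pn pk bk x qs w"
proof -
  from F have
    C1: "(\<Sum>n\<in>{1..N}. pn n) + (\<Sum>n\<in>{1..N}. \<Sum>k\<in>{1..K}. pkn k n) + (\<Sum>k\<in>{1..K}. q k) \<le> Pmax"
    and C2: "\<forall>k\<in>{1..K}. (\<Sum>n\<in>{1..N}. bkn k n) + w k \<le> x k * W k"
    and C3: "\<forall>k\<in>{1..K}. rho N0 (w k) (q k) (h k) \<ge> x k * RMC k"
    and C4: "num1 K N N0 B g gkn pn pkn bkn x \<ge> Rmin"
    and C5: "\<forall>k\<in>{1..K}. x k \<in> {0, 1}"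
    and C6: "\<forall>k\<in>{1..K}. \<forall>n\<in>{1..N}. bkn k n \<ge> 0" "\<forall>k\<in>{1..K}. w k \<ge> 0"
    and C7: "\<forall>n\<in>{1..N}. pn n \<ge> 0" "\<forall>k\<in>{1..K}. \<forall>n\<in>{1..N}. pkn k n \<ge> 0"
      "\<forall>k\<in>{1..K}. q k \<ge> 0"
    unfolding feas1_def by auto
  have xnn: "x k \<ge> 0" if "k \<in> {1..K}" for k
  proof -
    have "x k \<in> {0,1}" using C5 that by blast
    thus ?thesis by auto
  qed
  define qs where "qs k = (if x k = 1 then (SOME t. 0 \<le> t \<and> t \<le> q k \<and> rho N0 (w k) t (h k) = RMC k) else q k)" for k
  define pk where "pk k = (\<Sum>n\<in>{1..N}. pkn k n)" for k
  define bk where "bk k = x k * W k - w k" for k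
  have sb0: "\<And>k. k \<in> {1..K} \<Longrightarrow> (\<Sum>n\<in>{1..N}. bkn k n) \<ge> 0"
    using C6 by (auto intro!: sum_nonneg)
  have x0: "w k = 0" if k: "k \<in> {1..K}" and x: "x k = 0" for k
  proof -
    have "(\<Sum>n\<in>{1..N}. bkn k n) + w k \<le> x k * W k" using C2 k by blast
    thus ?thesis using x sb0[OF k] C6(2) k by force
  qed
  have w1: "\<And>k. k \<in> {1..K} \<Longrightarrow> x k = 1 \<Longrightarrow> w k > 0"
  proof -
    fix k assume k: "k \<in> {1..K}" and x1: "x k = 1"
    have "x k * RMC k \<le> rho N0 (w k) (q k) (h k)" using C3 k by blast
    hence "rho N0 (w k) (q k) (h k) \<ge> RMC k" using x1 by simp
    moreover have "RMC k > 0" using WRh k by auto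
    ultimately have "w k \<noteq> 0" by auto
    moreover have "w k \<ge> 0" using C6(2) k by blast
    ultimately show "w k > 0" by linarith
  qed
  have qsP: "\<And>k. k \<in> {1..K} \<Longrightarrow> 0 \<le> qs k \<and> qs k \<le> q k \<and> rho N0 (w k) (qs k) (h k) = x k * RMC k"
  proof -
    fix k assume k: "k \<in> {1..K}"
    show "0 \<le> qs k \<and> qs k \<le> q k \<and> rho N0 (w k) (qs k) (h k) = x k * RMC k"
    proof (cases "x k = 1")
      case True
      have "\<exists>t\<ge>0. t \<le> q k \<and> rho N0 (w k) t (h k) = RMC k"
      proof (rule rho_ivt)
        show "w k > 0" using w1 k True by blast
        have "W k > 0 \<and> RMC k > 0 \<and> h k > 0" using WRh k by blast
        thus "h k > 0" "0 \<le> RMC k" by auto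
        show "N0 > 0" by (rule N0)
        show "0 \<le> q k" using C7(3) k by blast
        have "x k * RMC k \<le> rho N0 (w k) (q k) (h k)" using C3 k by blast
        thus "RMC k \<le> rho N0 (w k) (q k) (h k)" using True by simp
      qed
      from someI_ex[OF this]
      have "0 \<le> qs k \<and> qs k \<le> q k \<and> rho N0 (w k) (qs k) (h k) = RMC k"
        unfolding qs_def using True by simp
      thus ?thesis using True by simp
    next
      case False
      hence "x k = 0" using C5 k by auto
      thus ?thesis using x0 k C7 qs_def by auto
    qed
  qed
  have bkP: "bk k \<ge> (\<Sum>n\<in>{1..N}. bkn k n)" if k: "k \<in> {1..K}" for k
  proof -
    have "(\<Sum>n\<in>{1..N}. bkn k n) + w k \<le> x k * W k" using C2 k by blast
    thus ?thesis unfolding bk_def by linarith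
  qed
  have pk0: "\<And>k. k \<in> {1..K} \<Longrightarrow> pk k \<ge> 0" unfolding pk_def using C7 by (auto intro!: sum_nonneg)
  have rate: "\<And>k. k \<in> {1..K} \<Longrightarrow>
      x k * (\<Sum>n\<in>{1..N}. rho N0 (bkn k n) (pkn k n) (gkn k n)) \<le> x k * rho N0 (bk k) (pk k) (gkn k (kp k))"
  proof -
    fix k assume k: "k \<in> {1..K}"
    have G: "gkn k (kp k) > 0" using gp kp k by auto
    have "(\<Sum>n\<in>{1..N}. rho N0 (bkn k n) (pkn k n) (gkn k n))
        \<le> (\<Sum>n\<in>{1..N}. rho N0 (bkn k n) (pkn k n) (gkn k (kp k)))"
      using k C6 C7 gp kp N0 by (intro sum_mono rho_mono_g) (auto simp: less_imp_le)
    also have "\<dots> \<le> rho N0 (\<Sum>n\<in>{1..N}. bkn k n) (pk k) (gkn k (kp k))"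
      unfolding pk_def using k C6 C7 G N0 by (intro rho_sum) auto
    also have "\<dots> \<le> rho N0 (bk k) (pk k) (gkn k (kp k))"
      using k sb0 bkP pk0 G N0 by (intro rho_mono_b) auto
    finally have *: "(\<Sum>n\<in>{1..N}. rho N0 (bkn k n) (pkn k n) (gkn k n)) \<le> rho N0 (bk k) (pk k) (gkn k (kp k))" .
    have "x k \<ge> 0" using xnn k by blast
    thus "x k * (\<Sum>n\<in>{1..N}. rho N0 (bkn k n) (pkn k n) (gkn k n)) \<le> x k * rho N0 (bk k) (pk k) (gkn k (kp k))"
      using * by (intro mult_left_mono) auto
  qed
  have num: "num1 K N N0 B g gkn pn pkn bkn x \<le> num2 K N N0 B g gkn kp pn pk bk x"
  proof -
    have "(\<Sum>k\<in>{1..K}. \<Sum>n\<in>{1..N}. x k * rho N0 (bkn k n) (pkn k n) (gkn k n))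
       = (\<Sum>k\<in>{1..K}. x k * (\<Sum>n\<in>{1..N}. rho N0 (bkn k n) (pkn k n) (gkn k n)))"
      by (simp add: sum_distrib_left)
    also have "\<dots> \<le> (\<Sum>k\<in>{1..K}. x k * rho N0 (bk k) (pk k) (gkn k (kp k)))"
      using rate by (intro sum_mono) auto
    finally show ?thesis unfolding num1_def num2_def by simp
  qed
  have swap: "(\<Sum>n\<in>{1..N}. \<Sum>k\<in>{1..K}. x k * pkn k n / xi) = (\<Sum>k\<in>{1..K}. x k * pk k / xi)"
    unfolding pk_def by (subst sum.swap) (simp add: sum_distrib_left sum_divide_distrib)
  have swap2: "(\<Sum>n\<in>{1..N}. \<Sum>k\<in>{1..K}. pkn k n) = (\<Sum>k\<in>{1..K}. pk k)"
    unfolding pk_def by (subst sum.swap) simp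
  have xq: "(\<Sum>k\<in>{1..K}. x k * qs k / xi) \<le> (\<Sum>k\<in>{1..K}. x k * q k / xi)"
    using qsP xnn xi by (intro sum_mono divide_right_mono mult_left_mono) auto
  have d0: "(\<Sum>n\<in>{1..N}. pn n / xi) + (\<Sum>k\<in>{1..K}. x k * pk k / xi) + (\<Sum>k\<in>{1..K}. x k * qs k / xi) \<ge> 0"
  proof -
    have "(\<Sum>n\<in>{1..N}. pn n / xi) \<ge> 0" using C7 xi by (intro sum_nonneg) auto
    moreover have "(\<Sum>k\<in>{1..K}. x k * pk k / xi) \<ge> 0" using xnn pk0 xi by (intro sum_nonneg) auto
    moreover have "(\<Sum>k\<in>{1..K}. x k * qs k / xi) \<ge> 0" using xnn qsP xi by (intro sum_nonneg) auto
    ultimately show ?thesis by linarith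
  qed
  have obj: "obj1 K N N0 xi Pc B g gkn pn pkn bkn x q w \<le> obj2 K N N0 xi Pc B g gkn kp pn pk bk x qs w"
    unfolding obj1_def obj2_def swap
    using num C4 Rmin d0 Pc xq by (intro frac_le) auto
  have qsum: "(\<Sum>k\<in>{1..K}. qs k) \<le> (\<Sum>k\<in>{1..K}. q k)" using qsP by (intro sum_mono) auto
  have feas: "feas2 K N N0 Pmax Rmin W RMC h B g gkn kp pn pk bk x qs w"
    unfolding feas2_def
  proof (intro conjI)
    show "(\<Sum>n\<in>{1..N}. pn n) + (\<Sum>k\<in>{1..K}. pk k) + (\<Sum>k\<in>{1..K}. qs k) \<le> Pmax"
      using C1 swap2 qsum by linarith
    show "\<forall>k\<in>{1..K}. bk k + w k = x k * W k" unfolding bk_def by auto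
    show "\<forall>k\<in>{1..K}. rho N0 (w k) (qs k) (h k) = x k * RMC k" using qsP by auto
    show "Rmin \<le> num2 K N N0 B g gkn kp pn pk bk x" using num C4 by linarith
    show "\<forall>k\<in>{1..K}. bk k \<ge> 0" using bkP sb0 order_trans by blast
  qed (use C5 C6 C7 pk0 qsP in auto)
  show ?thesis using feas obj by blast
qed

theorem theorem1:
  fixes K N :: nat
    and N0 xi Pc Pmax Rmin :: real
    and W RMC h :: "nat \<Rightarrow> real"
    and gkn :: "nat \<Rightarrow> nat \<Rightarrow> real"
    and B g :: "nat \<Rightarrow> real"
    and kp :: "nat \<Rightarrow> nat"
  assumes "N0 > 0" and "0 < xi" and "xi \<le> 1" and "Pc > 0" and "Pmax > 0" and "Rmin \<ge> 0"
    and "\<forall>k\<in>{1..K}. W k > 0 \<and> RMC k > 0 \<and> h k > 0"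
    and "\<forall>k\<in>{1..K}. \<forall>n\<in>{1..N}. gkn k n > 0"
    and "\<forall>n\<in>{1..N}. B n > 0 \<and> g n > 0"
    and "N \<ge> 1"
    and "\<forall>k\<in>{1..K}. kp k \<in> {1..N} \<and> (\<forall>n\<in>{1..N}. gkn k n \<le> gkn k (kp k))"
  shows
    "Sup {obj1 K N N0 xi Pc B g gkn pn pkn bkn x q w | pn pkn bkn x q w.
            feas1 K N N0 Pmax Rmin W RMC h B g gkn pn pkn bkn x q w}
     = Sup {obj2 K N N0 xi Pc B g gkn kp pn pk bk x q w | pn pk bk x q w.
            feas2 K N N0 Pmax Rmin W RMC h B g gkn kp pn pk bk x q w}
   \<and> (\<forall>pn pk bk x q w.
        feas2 K N N0 Pmax Rmin W RMC h B g gkn kp pn pk bk x q w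
      \<and> (\<forall>pn' pk' bk' x' q' w'. feas2 K N N0 Pmax Rmin W RMC h B g gkn kp pn' pk' bk' x' q' w' \<longrightarrow>
            obj2 K N N0 xi Pc B g gkn kp pn' pk' bk' x' q' w' \<le> obj2 K N N0 xi Pc B g gkn kp pn pk bk x q w)
      \<longrightarrow>
        feas1 K N N0 Pmax Rmin W RMC h B g gkn pn (ext kp pk) (ext kp bk) x q w
      \<and> (\<forall>pn' pkn' bkn' x' q' w'. feas1 K N N0 Pmax Rmin W RMC h B g gkn pn' pkn' bkn' x' q' w' \<longrightarrow>
            obj1 K N N0 xi Pc B g gkn pn' pkn' bkn' x' q' w' \<le> obj1 K N N0 xi Pc B g gkn pn (ext kp pk) (ext kp bk) x q w))"
proof -
  have kp': "\<forall>k\<in>{1..K}. kp k \<in> {1..N}" using assms(11) by blast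
  have T: "\<exists>pk bk qs. feas2 K N N0 Pmax Rmin W RMC h B g gkn kp pn pk bk x qs w
     \<and> obj1 K N N0 xi Pc B g gkn pn pkn bkn x q w \<le> obj2 K N N0 xi Pc B g gkn kp pn pk bk x qs w"
    if "feas1 K N N0 Pmax Rmin W RMC h B g gkn pn pkn bkn x q w" for pn pkn bkn x q w
    using transform[OF assms(1,2,4,6,7,8,11) that] .
  have E: "feas1 K N N0 Pmax Rmin W RMC h B g gkn pn (ext kp pk) (ext kp bk) x q w
     \<and> obj1 K N N0 xi Pc B g gkn pn (ext kp pk) (ext kp bk) x q w
       = obj2 K N N0 xi Pc B g gkn kp pn pk bk x q w"
    if "feas2 K N N0 Pmax Rmin W RMC h B g gkn kp pn pk bk x q w" for pn pk bk x q w
    using ext_feas[OF kp' that] .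
  show ?thesis
  proof (intro conjI allI impI)
    show "Sup {obj1 K N N0 xi Pc B g gkn pn pkn bkn x q w | pn pkn bkn x q w.
            feas1 K N N0 Pmax Rmin W RMC h B g gkn pn pkn bkn x q w}
     = Sup {obj2 K N N0 xi Pc B g gkn kp pn pk bk x q w | pn pk bk x q w.
            feas2 K N N0 Pmax Rmin W RMC h B g gkn kp pn pk bk x q w}"
    proof (rule Sup_same_ub, intro iffI ballI)
      fix z b
      assume H: "\<forall>a\<in>{obj1 K N N0 xi Pc B g gkn pn pkn bkn x q w | pn pkn bkn x q w.
            feas1 K N N0 Pmax Rmin W RMC h B g gkn pn pkn bkn x q w}. a \<le> z"
        and b: "b \<in> {obj2 K N N0 xi Pc B g gkn kp pn pk bk x q w | pn pk bk x q w.
            feas2 K N N0 Pmax Rmin W RMC h B g gkn kp pn pk bk x q w}"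
      from b obtain pn pk bk x q w where f: "feas2 K N N0 Pmax Rmin W RMC h B g gkn kp pn pk bk x q w"
        and bd: "b = obj2 K N N0 xi Pc B g gkn kp pn pk bk x q w" by blast
      from E[OF f] H show "b \<le> z" unfolding bd by fastforce
    next
      fix z a
      assume H: "\<forall>b\<in>{obj2 K N N0 xi Pc B g gkn kp pn pk bk x q w | pn pk bk x q w.
            feas2 K N N0 Pmax Rmin W RMC h B g gkn kp pn pk bk x q w}. b \<le> z"
        and a: "a \<in> {obj1 K N N0 xi Pc B g gkn pn pkn bkn x q w | pn pkn bkn x q w.
            feas1 K N N0 Pmax Rmin W RMC h B g gkn pn pkn bkn x q w}"
      from a obtain pn pkn bkn x q w where f: "feas1 K N N0 Pmax Rmin W RMC h B g gkn pn pkn bkn x q w"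
        and ad: "a = obj1 K N N0 xi Pc B g gkn pn pkn bkn x q w" by blast
      from T[OF f] obtain pk bk qs where
        f2: "feas2 K N N0 Pmax Rmin W RMC h B g gkn kp pn pk bk x qs w"
        and le: "a \<le> obj2 K N N0 xi Pc B g gkn kp pn pk bk x qs w" unfolding ad by blast
      have "obj2 K N N0 xi Pc B g gkn kp pn pk bk x qs w \<le> z" using H f2 by blast
      thus "a \<le> z" using le by linarith
    qed
  next
    fix pn pk bk x q w
    assume H: "feas2 K N N0 Pmax Rmin W RMC h B g gkn kp pn pk bk x q w
      \<and> (\<forall>pn' pk' bk' x' q' w'. feas2 K N N0 Pmax Rmin W RMC h B g gkn kp pn' pk' bk' x' q' w' \<longrightarrow>
            obj2 K N N0 xi Pc B g gkn kp pn' pk' bk' x' q' w' \<le> obj2 K N N0 xi Pc B g gkn kp pn pk bk x q w)"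
    note E1 = E[OF conjunct1[OF H]]
    show "feas1 K N N0 Pmax Rmin W RMC h B g gkn pn (ext kp pk) (ext kp bk) x q w" using E1 by blast
  next
    fix pn pk bk x q w pn' pkn' bkn' x' q' w'
    assume H: "feas2 K N N0 Pmax Rmin W RMC h B g gkn kp pn pk bk x q w
      \<and> (\<forall>pn' pk' bk' x' q' w'. feas2 K N N0 Pmax Rmin W RMC h B g gkn kp pn' pk' bk' x' q' w' \<longrightarrow>
            obj2 K N N0 xi Pc B g gkn kp pn' pk' bk' x' q' w' \<le> obj2 K N N0 xi Pc B g gkn kp pn pk bk x q w)"
    note E1 = E[OF conjunct1[OF H]]
      assume f: "feas1 K N N0 Pmax Rmin W RMC h B g gkn pn' pkn' bkn' x' q' w'"
      from T[OF f] obtain pk' bk' qs where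
        f2: "feas2 K N N0 Pmax Rmin W RMC h B g gkn kp pn' pk' bk' x' qs w'"
        and le: "obj1 K N N0 xi Pc B g gkn pn' pkn' bkn' x' q' w' \<le> obj2 K N N0 xi Pc B g gkn kp pn' pk' bk' x' qs w'"
        by blast
      have "obj2 K N N0 xi Pc B g gkn kp pn' pk' bk' x' qs w' \<le> obj2 K N N0 xi Pc B g gkn kp pn pk bk x q w"
        using H f2 by blast
      thus "obj1 K N N0 xi Pc B g gkn pn' pkn' bkn' x' q' w' \<le> obj1 K N N0 xi Pc B g gkn pn (ext kp pk) (ext kp bk) x q w"
        using le E1 by linarith
  qed
qed

end
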